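(* Let $F$ be a global function field with full constant field $k=\mathbb{F}_q$, let $x\in F$ be transcendental over $k$ with $n=[F:k(x)]$ and $\gcd(n,q)=1$, and let $S=\{P_1,\dots,P_{|S|}\}$ be a finite set of places of $F$ containing all infinite places of $F/k(x)$. If $\{b_1,\dots,b_{|S|-1}\}$ is an LLL-reduced basis of the $S$-unit lattice $\Lambda_S$, then \[ \max_{1\le i\le |S|-1}\|b_i\|_\infty\le 2^{(|S|-1)(|S|-2)/4}R_S. \]
   Context: The infinite places of $F/k(x)$ are the poles of $x$. $O_S^\times$ denotes the group of $S$-units of $F$. With a fixed ordering of $S$, let $\Phi_S:F^\times\to\mathbb{Z}^{|S|}$, $\alpha\mapsto(-v_{P_1}(\alpha)\deg P_1,\dots,-v_{P_{|S|}}(\alpha)\deg P_{|S|})$, where $v_P$ is the discrete valuation at $P$. The $S$-unit lattice is $\Lambda_S=\Phi_S(O_S^\times)$, a lattice of rank $|S|-1$ in $\mathbb{Z}^{|S|}$, and $R_S=\det\Lambda_S$ is its determinant (covolume). For $v\in\mathbb{Z}^{|S|}$, $\|v\|_\infty$ is the maximum absolute value of its entries. *)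

theory Defs
  imports "HOL-Computational_Algebra.Polynomial" "Jordan_Normal_Form.Determinant"
begin

(* The global field F is the whole type 'a :: field; k is a subset of it. *)

definition subfield :: "'a::field set \<Rightarrow> bool" where
  "subfield K \<longleftrightarrow> 0 \<in> K \<and> 1 \<in> K \<and>
     (\<forall>a\<in>K. \<forall>b\<in>K. a + b \<in> K \<and> a * b \<in> K) \<and>
     (\<forall>a\<in>K. - a \<in> K \<and> inverse a \<in> K)"

definition algebraic_over :: "'a::field set \<Rightarrow> 'a \<Rightarrow> bool" where
  "algebraic_over K z \<longleftrightarrow>
     (\<exists>p::'a poly. p \<noteq> 0 \<and> (\<forall>i. coeff p i \<in> K) \<and> poly p z = 0)"

definition rat_fun_field :: "'a::field set \<Rightarrow> 'a \<Rightarrow> 'a set" where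
  "rat_fun_field K x = {poly p x / poly q x | p q.
      (\<forall>i. coeff p i \<in> K) \<and> (\<forall>i. coeff q i \<in> K) \<and> poly q x \<noteq> 0}"

text \<open>B is a K-basis of M modulo N (e.g. of the residue field O_P/P, or of F when N = {0}).\<close>
definition basis_mod :: "'a::field set \<Rightarrow> 'a set \<Rightarrow> 'a set \<Rightarrow> 'a set \<Rightarrow> bool" where
  "basis_mod K M N B \<longleftrightarrow> finite B \<and> B \<subseteq> M \<and>
     (\<forall>z\<in>M. \<exists>c. (\<forall>b\<in>B. c b \<in> K) \<and> z - (\<Sum>b\<in>B. c b * b) \<in> N) \<and>
     (\<forall>c. (\<forall>b\<in>B. c b \<in> K) \<longrightarrow> (\<Sum>b\<in>B. c b * b) \<in> N \<longrightarrow> (\<forall>b\<in>B. c b = 0))"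

definition finite_dim_mod :: "'a::field set \<Rightarrow> 'a set \<Rightarrow> 'a set \<Rightarrow> bool" where
  "finite_dim_mod K M N \<longleftrightarrow> (\<exists>B. basis_mod K M N B)"

definition dim_mod :: "'a::field set \<Rightarrow> 'a set \<Rightarrow> 'a set \<Rightarrow> nat" where
  "dim_mod K M N = (THE n. \<exists>B. basis_mod K M N B \<and> card B = n)"

definition field_degree :: "'a::field set \<Rightarrow> nat" where
  "field_degree K = dim_mod K UNIV {0}"

definition valuation_ring :: "'a::field set \<Rightarrow> 'a set \<Rightarrow> bool" where
  "valuation_ring k Ov \<longleftrightarrow> k \<subseteq> Ov \<and> k \<noteq> Ov \<and> Ov \<noteq> UNIV \<and> 1 \<in> Ov \<and>
     (\<forall>a\<in>Ov. \<forall>b\<in>Ov. a + b \<in> Ov \<and> a * b \<in> Ov \<and> - a \<in> Ov) \<and>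
     (\<forall>z. z \<noteq> 0 \<longrightarrow> z \<in> Ov \<or> inverse z \<in> Ov)"

text \<open>A place of F/k is the maximal ideal of a valuation ring of F/k.\<close>
definition is_place :: "'a::field set \<Rightarrow> 'a set \<Rightarrow> bool" where
  "is_place k P \<longleftrightarrow> (\<exists>Ov. valuation_ring k Ov \<and> P = {z\<in>Ov. z = 0 \<or> inverse z \<notin> Ov})"

text \<open>The valuation ring O_P of a place P.\<close>
definition ring_of :: "'a::field set \<Rightarrow> 'a set" where
  "ring_of P = {z. \<forall>p\<in>P. z * p \<in> P}"

text \<open>Discrete valuation v_P(z) for z \<noteq> 0: z = t^m u with t a prime element, u a unit of O_P.\<close>
definition val :: "'a::field set \<Rightarrow> 'a \<Rightarrow> int" where
  "val P z = (THE m::int. \<exists>t. t \<in> P \<and> P = {t * u | u. u \<in> ring_of P} \<and>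
                  z * t powi (- m) \<in> ring_of P - P)"

definition place_deg :: "'a::field set \<Rightarrow> 'a set \<Rightarrow> nat" where
  "place_deg k P = dim_mod k (ring_of P) P"

definition S_units :: "'a::field set \<Rightarrow> 'a set set \<Rightarrow> 'a set" where
  "S_units k S = {z. z \<noteq> 0 \<and> (\<forall>P. is_place k P \<and> P \<notin> S \<longrightarrow> z \<in> ring_of P - P)}"

text \<open>Phi_S, for the ordering of S given by the list Ps; vectors in Z^|S| are functions
  nat => int (zero outside the index range {..<|S|}).\<close>
definition Phi :: "'a::field set \<Rightarrow> 'a set list \<Rightarrow> 'a \<Rightarrow> nat \<Rightarrow> int" where
  "Phi k Ps z = (\<lambda>i. if i < length Ps then - val (Ps ! i) z * int (place_deg k (Ps ! i)) else 0)"

definition S_unit_lattice :: "'a::field set \<Rightarrow> 'a set list \<Rightarrow> (nat \<Rightarrow> int) set" where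
  "S_unit_lattice k Ps = Phi k Ps ` S_units k (set Ps)"

(* Lattice geometry in Z^s \<subseteq> R^s; a list of m vectors is a function nat => (nat => _) *)

definition ip :: "nat \<Rightarrow> (nat \<Rightarrow> real) \<Rightarrow> (nat \<Rightarrow> real) \<Rightarrow> real" where
  "ip s u v = (\<Sum>j<s. u j * v j)"

definition rvec :: "(nat \<Rightarrow> int) \<Rightarrow> nat \<Rightarrow> real" where
  "rvec v = (\<lambda>j. real_of_int (v j))"

definition inf_norm :: "nat \<Rightarrow> (nat \<Rightarrow> int) \<Rightarrow> int" where
  "inf_norm s v = Max ((\<lambda>j. \<bar>v j\<bar>) ` {..<s})"

definition lattice_basis :: "nat \<Rightarrow> nat \<Rightarrow> (nat \<Rightarrow> int) set \<Rightarrow> (nat \<Rightarrow> nat \<Rightarrow> int) \<Rightarrow> bool" where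
  "lattice_basis s m L b \<longleftrightarrow>
     (\<forall>i<m. \<forall>j. s \<le> j \<longrightarrow> b i j = 0) \<and>
     L = {(\<lambda>j. \<Sum>i<m. c i * b i j) | c :: nat \<Rightarrow> int. True} \<and>
     (\<forall>c :: nat \<Rightarrow> real. (\<forall>j<s. (\<Sum>i<m. c i * real_of_int (b i j)) = 0) \<longrightarrow> (\<forall>i<m. c i = 0))"

fun gso :: "nat \<Rightarrow> (nat \<Rightarrow> nat \<Rightarrow> real) \<Rightarrow> nat \<Rightarrow> nat \<Rightarrow> real" where
  "gso s b i = (\<lambda>k. b i k - (\<Sum>j<i. (ip s (b i) (gso s b j) / ip s (gso s b j) (gso s b j)) * gso s b j k))"

definition gs_coeff :: "nat \<Rightarrow> (nat \<Rightarrow> nat \<Rightarrow> real) \<Rightarrow> nat \<Rightarrow> nat \<Rightarrow> real" where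
  "gs_coeff s b i j = ip s (b i) (gso s b j) / ip s (gso s b j) (gso s b j)"

definition LLL_reduced :: "nat \<Rightarrow> nat \<Rightarrow> (nat \<Rightarrow> nat \<Rightarrow> int) \<Rightarrow> bool" where
  "LLL_reduced s m b \<longleftrightarrow>
     (let rb = (\<lambda>i. rvec (b i)) in
       (\<forall>i<m. \<forall>j<i. \<bar>gs_coeff s rb i j\<bar> \<le> 1/2) \<and>
       (\<forall>i. 0 < i \<and> i < m \<longrightarrow>
          ip s (gso s rb i) (gso s rb i) \<ge>
          (3/4 - (gs_coeff s rb i (i - 1))\<^sup>2) * ip s (gso s rb (i - 1)) (gso s rb (i - 1))))"

definition gram_det :: "nat \<Rightarrow> nat \<Rightarrow> (nat \<Rightarrow> nat \<Rightarrow> int) \<Rightarrow> real" where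
  "gram_det s m b = det (mat m m (\<lambda>(i, j). ip s (rvec (b i)) (rvec (b j))))"

text \<open>Determinant (covolume) of a lattice of rank m in Z^s: sqrt of the Gram determinant
  of any basis (independent of the basis).\<close>
definition lattice_det :: "nat \<Rightarrow> nat \<Rightarrow> (nat \<Rightarrow> int) set \<Rightarrow> real" where
  "lattice_det s m L = (THE d. \<exists>b. lattice_basis s m L b \<and> d = sqrt (gram_det s m b))"

end

theory Submission
  imports Defs
begin

declare gso.simps[simp del]

lemma gso_eq: "gso s b i k = b i k - (\<Sum>j<i. gs_coeff s b i j * gso s b j k)"
  by (subst gso.simps) (simp add: gs_coeff_def)

lemma gso_fun: "gso s b i = (\<lambda>k. b i k - (\<Sum>j<i. gs_coeff s b i j * gso s b j k))"
  by (rule ext, rule gso_eq)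

lemma ip_sym: "ip s u v = ip s v u" by (simp add: ip_def mult.commute)
lemma ip_nonneg: "ip s u u \<ge> 0" by (simp add: ip_def sum_nonneg)
lemma ip_zero: assumes "ip s u u = 0" "j < s" shows "u j = 0"
proof -
  have "\<forall>j\<in>{..<s}. u j * u j = 0"
    using assms(1) unfolding ip_def by (subst sum_nonneg_eq_0_iff[symmetric]) auto
  thus ?thesis using assms(2) by auto
qed
lemma ip_zero2: assumes "ip s u u = 0" shows "ip s v u = 0"
  using ip_zero[OF assms] unfolding ip_def by simp

lemma ip_sub_sum: "ip s (\<lambda>k. a k - (\<Sum>j<i. c j * g j k)) v = ip s a v - (\<Sum>j<i. c j * ip s (g j) v)"
  unfolding ip_def by (simp add: algebra_simps sum_subtractf sum_distrib_left sum_distrib_right sum.swap[of _ "{..<s}"])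

lemma gso_orth: "j < i \<Longrightarrow> ip s (gso s b i) (gso s b j) = 0"
proof (induction i arbitrary: j rule: less_induct)
  case (less i)
  have o: "ip s (gso s b l) (gso s b j) = 0" if "l<i" "l \<noteq> j" for l
  proof (cases "l < j")
    case True thus ?thesis using less.IH[of j l] less.prems ip_sym by metis
  next
    case False thus ?thesis using less.IH[of l j] that by simp
  qed
  have "ip s (gso s b i) (gso s b j) = ip s (b i) (gso s b j) - (\<Sum>l<i. gs_coeff s b i l * ip s (gso s b l) (gso s b j))"
    by (subst gso_fun) (rule ip_sub_sum)
  also have "(\<Sum>l<i. gs_coeff s b i l * ip s (gso s b l) (gso s b j)) = gs_coeff s b i j * ip s (gso s b j) (gso s b j)"
    by (subst sum.remove[of _ j]) (use less.prems o in auto)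
  also have "ip s (b i) (gso s b j) - gs_coeff s b i j * ip s (gso s b j) (gso s b j) = 0"
  proof (cases "ip s (gso s b j) (gso s b j) = 0")
    case True thus ?thesis using ip_zero2 by simp
  next
    case False thus ?thesis by (simp add: gs_coeff_def)
  qed
  finally show ?case .
qed

lemma gso_orth': "i \<noteq> j \<Longrightarrow> ip s (gso s b i) (gso s b j) = 0"
  by (metis gso_orth ip_sym linorder_neqE_nat)

definition Mc :: "nat \<Rightarrow> (nat \<Rightarrow> nat \<Rightarrow> real) \<Rightarrow> nat \<Rightarrow> nat \<Rightarrow> real" where
  "Mc s b i l = (if l < i then gs_coeff s b i l else if l = i then 1 else 0)"

lemma b_decomp: assumes "i < m" shows "b i k = (\<Sum>l<m. Mc s b i l * gso s b l k)"
proof -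
  have "{..<m} = {..<i} \<union> {i..<m}" using assms by auto
  hence "(\<Sum>l<m. Mc s b i l * gso s b l k) = (\<Sum>l<i. Mc s b i l * gso s b l k) + (\<Sum>l\<in>{i..<m}. Mc s b i l * gso s b l k)"
    by (metis sum.union_disjoint finite_lessThan finite_atLeastLessThan ivl_disj_int(2) lessThan_atLeast0)
  also have "(\<Sum>l\<in>{i..<m}. Mc s b i l * gso s b l k) = gso s b i k"
    using assms by (subst sum.remove[of _ i]) (auto simp: Mc_def intro!: sum.neutral)
  also have "(\<Sum>l<i. Mc s b i l * gso s b l k) = (\<Sum>l<i. gs_coeff s b i l * gso s b l k)"
    by (rule sum.cong) (auto simp: Mc_def)
  finally show ?thesis by (simp add: gso_eq[of s b i k])
qed

lemma ip_b: assumes "i < m" "j < m"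
  shows "ip s (b i) (b j) = (\<Sum>l<m. Mc s b i l * Mc s b j l * ip s (gso s b l) (gso s b l))"
proof -
  have "ip s (b i) (b j) = (\<Sum>k<s. (\<Sum>l<m. Mc s b i l * gso s b l k) * (\<Sum>l'<m. Mc s b j l' * gso s b l' k))"
    unfolding ip_def using b_decomp[OF assms(1)] b_decomp[OF assms(2)] by simp
  also have "\<dots> = (\<Sum>k<s. \<Sum>l<m. \<Sum>l'<m. Mc s b i l * Mc s b j l' * (gso s b l k * gso s b l' k))"
    by (simp add: sum_product algebra_simps)
  also have "\<dots> = (\<Sum>l<m. \<Sum>k<s. \<Sum>l'<m. Mc s b i l * Mc s b j l' * (gso s b l k * gso s b l' k))"
    by (rule sum.swap)
  also have "\<dots> = (\<Sum>l<m. \<Sum>l'<m. \<Sum>k<s. Mc s b i l * Mc s b j l' * (gso s b l k * gso s b l' k))"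
    by (rule sum.cong[OF refl], rule sum.swap)
  also have "\<dots> = (\<Sum>l<m. \<Sum>l'<m. Mc s b i l * Mc s b j l' * ip s (gso s b l) (gso s b l'))"
    unfolding ip_def by (simp add: sum_distrib_left)
  also have "\<dots> = (\<Sum>l<m. Mc s b i l * Mc s b j l * ip s (gso s b l) (gso s b l))"
    by (rule sum.cong[OF refl], subst sum.remove[of _ l for l]) (auto simp: gso_orth' intro!: sum.neutral)
  finally show ?thesis .
qed

lemma gram_prod: "det (mat m m (\<lambda>(i,j). ip s (b i) (b j))) = (\<Prod>l<m. ip s (gso s b l) (gso s b l))"
proof -
  define Mm where "Mm = mat m m (\<lambda>(i,l). Mc s b i l)"
  define Dm where "Dm = mat m m (\<lambda>(i,j). if i = j then ip s (gso s b i) (gso s b i) else 0)"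
  have MD: "(Mm * Dm) $$ (i,l) = Mc s b i l * ip s (gso s b l) (gso s b l)" if "i < m" "l < m" for i l
  proof -
    have "(Mm * Dm) $$ (i,l) = (\<Sum>l'\<in>{0..<m}. Mc s b i l' * (if l' = l then ip s (gso s b l) (gso s b l) else 0))"
      using that by (auto simp: Mm_def Dm_def scalar_prod_def row_def col_def intro!: sum.cong)
    also have "\<dots> = Mc s b i l * ip s (gso s b l) (gso s b l)"
      using that by (simp add: if_distrib cong: if_cong)
    finally show ?thesis .
  qed
  have eq: "mat m m (\<lambda>(i,j). ip s (b i) (b j)) = Mm * Dm * transpose_mat Mm"
  proof (rule eq_matI)
    fix i j assume ij: "i < dim_row (Mm * Dm * transpose_mat Mm)" "j < dim_col (Mm * Dm * transpose_mat Mm)"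
    hence ij': "i < m" "j < m" by (auto simp: Mm_def Dm_def)
    have "(Mm * Dm * transpose_mat Mm) $$ (i,j) = (\<Sum>l\<in>{0..<m}. (Mm * Dm) $$ (i,l) * Mc s b j l)"
      using ij' by (simp add: Mm_def Dm_def scalar_prod_def row_def col_def)
    also have "\<dots> = (\<Sum>l<m. Mc s b i l * Mc s b j l * ip s (gso s b l) (gso s b l))"
      using ij' by (auto simp: MD lessThan_atLeast0 intro!: sum.cong)
    also have "\<dots> = ip s (b i) (b j)" using ip_b[OF ij'] by simp
    finally show "mat m m (\<lambda>(i,j). ip s (b i) (b j)) $$ (i,j) = (Mm * Dm * transpose_mat Mm) $$ (i,j)"
      using ij' by simp
  qed (auto simp: Mm_def Dm_def)
  have cM: "Mm \<in> carrier_mat m m" and cD: "Dm \<in> carrier_mat m m" by (auto simp: Mm_def Dm_def)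
  have dM: "det Mm = 1"
    by (subst det_lower_triangular[OF _ cM]) (auto simp: Mm_def Mc_def prod_list_diag_prod intro!: prod.neutral)
  have dD: "det Dm = (\<Prod>l<m. ip s (gso s b l) (gso s b l))"
    by (subst det_upper_triangular[OF _ cD]) (auto simp: Dm_def upper_triangular_def prod_list_diag_prod lessThan_atLeast0 intro!: prod.cong)
  show ?thesis unfolding eq
    using cM cD dM dD by (simp add: det_mult[of _ m] det_transpose)
qed

definition Bmat :: "nat \<Rightarrow> nat \<Rightarrow> (nat \<Rightarrow> nat \<Rightarrow> int) \<Rightarrow> real mat" where
  "Bmat s m b = mat m s (\<lambda>(i,j). real_of_int (b i j))"

lemma gram_det_Bmat: "gram_det s m b = det (Bmat s m b * transpose_mat (Bmat s m b))"
proof -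
  have "mat m m (\<lambda>(i, j). ip s (rvec (b i)) (rvec (b j))) = Bmat s m b * transpose_mat (Bmat s m b)"
    by (rule eq_matI) (auto simp: Bmat_def ip_def rvec_def scalar_prod_def lessThan_atLeast0)
  thus ?thesis unfolding gram_det_def by simp
qed

lemma change_mat:
  assumes "\<forall>i<m. b' i = (\<lambda>j. \<Sum>l<m. cU i l * b l j)"
  shows "Bmat s m b' = mat m m (\<lambda>(i,l). real_of_int (cU i l)) * Bmat s m b"
  by (rule eq_matI) (use assms in \<open>auto simp: Bmat_def scalar_prod_def lessThan_atLeast0\<close>)

lemma det_int_mat: "det (mat m m (\<lambda>(i,l). real_of_int (cU i l))) = real_of_int (det (mat m m (\<lambda>(i,l). cU i l)))"
proof -
  have "mat m m (\<lambda>(i,l). real_of_int (cU i l)) = map_mat real_of_int (mat m m (\<lambda>(i,l). cU i l))"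
    by (rule eq_matI) auto
  thus ?thesis by (simp add: of_int_hom.hom_det)
qed

lemma basis_mem: assumes "lattice_basis s m L b" "i < m" shows "b i \<in> L"
proof -
  have "b i = (\<lambda>j. \<Sum>l<m. (if l = i then 1 else 0) * b l j)"
    using assms(2) by (intro ext, subst sum.remove[of _ i]) auto
  moreover have "L = {(\<lambda>j. \<Sum>i<m. c i * b i j) | c :: nat \<Rightarrow> int. True}"
    using assms(1) unfolding lattice_basis_def by blast
  ultimately show ?thesis by auto
qed

lemma gram_det_unique:
  assumes b: "lattice_basis s m L b" and b': "lattice_basis s m L b'"
  shows "gram_det s m b' = gram_det s m b"
proof -
  have "\<forall>i<m. \<exists>c. b' i = (\<lambda>j. \<Sum>l<m. c l * b l j)"
  proof (intro allI impI)
    fix i assume "i < m"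
    have "b' i \<in> L" using basis_mem[OF b' \<open>i<m\<close>] .
    thus "\<exists>c. b' i = (\<lambda>j. \<Sum>l<m. c l * b l j)" using b unfolding lattice_basis_def by auto
  qed
  then obtain cU where cU: "\<forall>i<m. b' i = (\<lambda>j. \<Sum>l<m. cU i l * b l j)" by metis
  have "\<forall>i<m. \<exists>c. b i = (\<lambda>j. \<Sum>l<m. c l * b' l j)"
  proof (intro allI impI)
    fix i assume "i < m"
    have "b i \<in> L" using basis_mem[OF b \<open>i<m\<close>] .
    thus "\<exists>c. b i = (\<lambda>j. \<Sum>l<m. c l * b' l j)" using b' unfolding lattice_basis_def by auto
  qed
  then obtain cV where cV: "\<forall>i<m. b i = (\<lambda>j. \<Sum>l<m. cV i l * b' l j)" by metis
  define Ur where "Ur = mat m m (\<lambda>(i,l). real_of_int (cU i l))"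
  define Vr where "Vr = mat m m (\<lambda>(i,l). real_of_int (cV i l))"
  define B where "B = Bmat s m b"
  have cUr: "Ur \<in> carrier_mat m m" and cVr: "Vr \<in> carrier_mat m m" and cB: "B \<in> carrier_mat m s"
    by (auto simp: Ur_def Vr_def B_def Bmat_def)
  have B': "Bmat s m b' = Ur * B" unfolding Ur_def B_def by (rule change_mat[OF cU])
  have BB: "B = Vr * (Ur * B)" unfolding B' [symmetric] unfolding Vr_def B_def by (rule change_mat[OF cV])
  have W: "Vr * Ur = 1\<^sub>m m"
  proof (rule eq_matI)
    fix i l assume "i < dim_row (1\<^sub>m m)" "l < dim_col (1\<^sub>m m)"
    hence il: "i < m" "l < m" by auto
    define c where "c = (\<lambda>l. (Vr * Ur) $$ (i,l) - (if l = i then 1 else 0))"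
    have "\<forall>j<s. (\<Sum>l<m. c l * real_of_int (b l j)) = 0"
    proof (intro allI impI)
      fix j assume j: "j < s"
      have "B $$ (i,j) = ((Vr * Ur) * B) $$ (i,j)" using BB cUr cVr cB by simp
      also have "\<dots> = (\<Sum>l<m. (Vr * Ur) $$ (i,l) * real_of_int (b l j))"
        using il j cUr cVr by (simp add: B_def Bmat_def scalar_prod_def lessThan_atLeast0)
      finally have "real_of_int (b i j) = (\<Sum>l<m. (Vr * Ur) $$ (i,l) * real_of_int (b l j))"
        using il j by (simp add: B_def Bmat_def)
      moreover have "(\<Sum>l<m. (if l = i then 1 else 0) * real_of_int (b l j)) = real_of_int (b i j)"
        using il by (subst sum.remove[of _ i]) auto
      ultimately show "(\<Sum>l<m. c l * real_of_int (b l j)) = 0"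
        unfolding c_def by (simp add: algebra_simps sum_subtractf)
    qed
    hence "c l = 0" using b il unfolding lattice_basis_def by blast
    thus "(Vr * Ur) $$ (i, l) = 1\<^sub>m m $$ (i, l)" using il unfolding c_def by auto
  qed (use cUr cVr in auto)
  have "det Vr * det Ur = 1" using det_mult[OF cVr cUr] W by simp
  hence "real_of_int (det (mat m m (\<lambda>(i,l). cV i l)) * det (mat m m (\<lambda>(i,l). cU i l))) = 1"
    unfolding Ur_def Vr_def det_int_mat by simp
  hence "det (mat m m (\<lambda>(i,l). cV i l)) * det (mat m m (\<lambda>(i,l). cU i l)) = 1"
    using of_int_eq_1_iff by blast
  hence "det (mat m m (\<lambda>(i,l). cU i l)) = 1 \<or> det (mat m m (\<lambda>(i,l). cU i l)) = -1"
    using zmult_eq_1_iff by blast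
  hence dU: "det Ur * det Ur = 1" unfolding Ur_def det_int_mat by auto
  have "Bmat s m b' * transpose_mat (Bmat s m b') = Ur * (B * transpose_mat B) * transpose_mat Ur"
  proof -
    have t: "transpose_mat (Ur * B) = transpose_mat B * transpose_mat Ur" by (rule transpose_mult[OF cUr cB])
    have cBt: "transpose_mat B \<in> carrier_mat s m" and cUt: "transpose_mat Ur \<in> carrier_mat m m" using cB cUr by auto
    have cBB: "B * transpose_mat B \<in> carrier_mat m m" using cB cBt by auto
    show ?thesis unfolding B' t
      using assoc_mult_mat[OF cUr cB cBt] assoc_mult_mat[OF cUr cBB cUt] assoc_mult_mat[OF cB cBt cUt]
        assoc_mult_mat[OF mult_carrier_mat[OF cUr cB] cBt cUt] by simp
  qed
  hence "det (Bmat s m b' * transpose_mat (Bmat s m b')) = det Ur * det (B * transpose_mat B) * det Ur"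
    using cUr cB by (simp add: det_mult[of _ m] det_transpose)
  thus ?thesis unfolding gram_det_Bmat B_def using dU by (simp add: algebra_simps)
qed


lemma geom_half: "(\<Sum>l<i. (1/2::real)^l) = 2 - 2 * (1/2)^i"
  by (induction i) auto

lemma prod_pow2: "(\<Prod>l<m. (2::real)^l) = 2 powr (real m * (real m - 1) / 2)"
proof (induction m)
  case 0 thus ?case by simp
next
  case (Suc m)
  have "(\<Prod>l<Suc m. (2::real)^l) = 2 powr (real m * (real m - 1) / 2) * 2 powr (real m)"
    using Suc by (simp add: powr_realpow)
  also have "\<dots> = 2 powr (real m * (real m - 1) / 2 + real m)" by (simp add: powr_add)
  also have "real m * (real m - 1) / 2 + real m = real (Suc m) * (real (Suc m) - 1) / 2"
    by (simp add: field_simps)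
  finally show ?case .
qed

lemma prod_ge_single:
  fixes a :: "nat \<Rightarrow> real"
  assumes "\<forall>l<m. a l \<ge> 1" "i < m"
  shows "a i \<le> (\<Prod>l<m. a l)"
proof -
  have "(\<Prod>l<m. a l) = a i * (\<Prod>l\<in>{..<m} - {i}. a l)"
    using assms(2) by (subst prod.remove[of _ i]) auto
  moreover have "(\<Prod>l\<in>{..<m} - {i}. a l) \<ge> 1" using assms(1) by (intro prod_ge_1) auto
  moreover have "a i \<ge> 1" using assms by auto
  ultimately show ?thesis by (metis mult_left_mono mult.right_neutral order_trans zero_le_one)
qed

lemma sum_split_at: "i < (m::nat) \<Longrightarrow> (\<Sum>l<m. F l) = (\<Sum>l<i. F l) + (\<Sum>l\<in>{i..<m}. F l)"
proof -
  assume i: "i < m"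
  have "{..<m} = {..<i} \<union> {i..<m}" using i by auto
  thus ?thesis by (metis sum.union_disjoint finite_lessThan finite_atLeastLessThan ivl_disj_int(2) lessThan_atLeast0)
qed

lemma Mc_sq_sum: assumes i: "i < m"
  shows "(\<Sum>l<m. Mc s rb i l * Mc s rb i l * N l) = (\<Sum>l<i. (gs_coeff s rb i l)\<^sup>2 * N l) + N i"
proof -
  have a: "(\<Sum>l\<in>{i..<m}. Mc s rb i l * Mc s rb i l * N l) = N i"
  proof -
    have "(\<Sum>l\<in>{i..<m}. Mc s rb i l * Mc s rb i l * N l) = Mc s rb i i * Mc s rb i i * N i + (\<Sum>l\<in>{i..<m} - {i}. Mc s rb i l * Mc s rb i l * N l)"
      using i by (intro sum.remove) auto
    also have "(\<Sum>l\<in>{i..<m} - {i}. Mc s rb i l * Mc s rb i l * N l) = 0"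
      by (intro sum.neutral) (auto simp: Mc_def)
    finally show ?thesis by (simp add: Mc_def)
  qed
  have b: "(\<Sum>l<i. Mc s rb i l * Mc s rb i l * N l) = (\<Sum>l<i. (gs_coeff s rb i l)\<^sup>2 * N l)"
    by (intro sum.cong refl) (simp add: Mc_def power2_eq_square)
  show ?thesis using sum_split_at[OF i, of "\<lambda>l. Mc s rb i l * Mc s rb i l * N l"] a b by simp
qed

lemma LLL_bound:
  assumes LLL: "LLL_reduced s m b" and i: "i < m"
  shows "ip s (rvec (b i)) (rvec (b i)) \<le> 2^i * ip s (gso s (\<lambda>i. rvec (b i)) i) (gso s (\<lambda>i. rvec (b i)) i)"
proof -
  define rb where "rb = (\<lambda>i. rvec (b i))"
  define N where "N = (\<lambda>l. ip s (gso s rb l) (gso s rb l))"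
  define f where "f = (\<lambda>l. (2::real)^l * N l)"
  have Nnn: "N l \<ge> 0" for l unfolding N_def by (rule ip_nonneg)
  have size: "\<And>i j. i < m \<Longrightarrow> j < i \<Longrightarrow> \<bar>gs_coeff s rb i j\<bar> \<le> 1/2"
    and lov: "\<And>i. 0 < i \<Longrightarrow> i < m \<Longrightarrow> N i \<ge> (3/4 - (gs_coeff s rb i (i - 1))\<^sup>2) * N (i - 1)"
    using LLL unfolding LLL_reduced_def Let_def rb_def N_def by auto
  have sq: "(gs_coeff s rb i j)\<^sup>2 \<le> 1/4" if "i < m" "j < i" for i j
  proof -
    define g where "g = gs_coeff s rb i j"
    have "\<bar>g\<bar> \<le> 1/2" unfolding g_def using size[OF that] .
    hence "0 \<le> (1/2 - g) * (1/2 + g)" by (intro mult_nonneg_nonneg) auto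
    hence "g\<^sup>2 \<le> 1/4" by (simp add: algebra_simps power2_eq_square)
    thus ?thesis unfolding g_def .
  qed
  have step: "f l \<le> f (Suc l)" if "Suc l < m" for l
  proof -
    have l1: "N (Suc l) \<ge> (3/4 - (gs_coeff s rb (Suc l) l)\<^sup>2) * N l"
      using lov[of "Suc l"] that by (simp only: diff_Suc_1 zero_less_Suc simp_thms)
    have l2: "(3/4 - (gs_coeff s rb (Suc l) l)\<^sup>2) * N l \<ge> 1/2 * N l"
      using sq[of "Suc l" l] that Nnn[of l] by (intro mult_right_mono) auto
    from l1 l2 have "N l \<le> 2 * N (Suc l)" by linarith
    hence "(2::real)^l * N l \<le> 2^l * (2 * N (Suc l))" by (rule mult_left_mono) simp
    thus ?thesis unfolding f_def by (simp only: power_Suc ac_simps)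
  qed
  have mono: "f j \<le> f i'" if "j \<le> i'" "i' < m" for j i'
    using that
  proof (induction i')
    case 0 thus ?case by simp
  next
    case (Suc i')
    show ?case
    proof (cases "j = Suc i'")
      case True thus ?thesis by simp
    next
      case False
      hence "f j \<le> f i'" using Suc by auto
      also have "f i' \<le> f (Suc i')" using step Suc by auto
      finally show ?thesis .
    qed
  qed
  have e0: "ip s (rb i) (rb i) = (\<Sum>l<m. Mc s rb i l * Mc s rb i l * N l)"
    unfolding N_def by (rule ip_b[OF i i])
  have e1: "(\<Sum>l<m. Mc s rb i l * Mc s rb i l * N l) = (\<Sum>l<i. (gs_coeff s rb i l)\<^sup>2 * N l) + N i"
    by (rule Mc_sq_sum[OF i])
  have e2: "(\<Sum>l<i. (gs_coeff s rb i l)\<^sup>2 * N l) \<le> (\<Sum>l<i. 1/4 * f i * (1/2)^l)"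
  proof (rule sum_mono)
    fix l assume l: "l \<in> {..<i}"
    have pl: "(2::real)^l * (1/2)^l = 1" by (simp add: power_mult_distrib[symmetric])
    have Nl: "N l = f l * (1/2)^l" unfolding f_def
      by (metis pl mult.commute mult.left_commute mult.right_neutral)
    have fl: "f l \<le> f i" using mono[of l i] l i by auto
    have "(gs_coeff s rb i l)\<^sup>2 * N l \<le> 1/4 * N l" using sq[of i l] l i Nnn[of l] by (intro mult_right_mono) auto
    also have "1/4 * N l = 1/4 * (1/2)^l * f l" unfolding Nl by (simp only: ac_simps)
    also have "\<dots> \<le> 1/4 * (1/2)^l * f i" using fl by (intro mult_left_mono) auto
    also have "\<dots> = 1/4 * f i * (1/2)^l" by (simp only: ac_simps)
    finally show "(gs_coeff s rb i l)\<^sup>2 * N l \<le> 1/4 * f i * (1/2)^l" .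
  qed
  have e3: "(\<Sum>l<i. 1/4 * f i * (1/2::real)^l) = 1/4 * f i * (2 - 2 * (1/2)^i)"
    by (simp only: sum_distrib_left[symmetric] geom_half)
  have e4: "1/4 * f i * (2 - 2 * (1/2)^i) + N i = f i / 2 + N i / 2"
  proof -
    have pi: "(2::real)^i * (1/2)^i = 1" by (simp add: power_mult_distrib[symmetric])
    have "1/4 * f i * (2 - 2 * (1/2)^i) = f i / 2 - ((2::real)^i * (1/2)^i) * N i / 2"
      unfolding f_def by (simp add: algebra_simps)
    thus ?thesis unfolding pi by (simp add: field_simps)
  qed
  have e5: "f i / 2 + N i / 2 \<le> f i"
  proof -
    have "1 \<le> (2::real)^i" by simp
    hence "1 * N i \<le> 2^i * N i" using Nnn[of i] by (rule mult_right_mono)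
    hence "N i \<le> f i" unfolding f_def by simp
    thus ?thesis by simp
  qed
  have "ip s (rb i) (rb i) \<le> f i" using e0 e1 e2 e3 e4 e5 by linarith
  thus ?thesis unfolding f_def N_def rb_def .
qed



theorem corollary2p3:
  fixes k :: "'a::field set" and x :: 'a and Ps :: "'a set list"
    and b :: "nat \<Rightarrow> nat \<Rightarrow> int"
  assumes k_field: "subfield k" and k_fin: "finite k"
    and full_const: "\<forall>z. algebraic_over k z \<longrightarrow> z \<in> k"
    and x_trans: "\<not> algebraic_over k x"
    and fin_ext: "finite_dim_mod (rat_fun_field k x) UNIV {0}"
    and coprime: "gcd (field_degree (rat_fun_field k x)) (card k) = 1"
    and Ps_places: "\<forall>P\<in>set Ps. is_place k P" and Ps_dist: "distinct Ps"
    and infinite_in_S: "\<forall>P. is_place k P \<and> x \<notin> ring_of P \<longrightarrow> P \<in> set Ps"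
    and basis: "lattice_basis (length Ps) (length Ps - 1) (S_unit_lattice k Ps) b"
    and LLL: "LLL_reduced (length Ps) (length Ps - 1) b"
  shows "\<forall>i < length Ps - 1. real_of_int (inf_norm (length Ps) (b i))
           \<le> 2 powr ((real (length Ps) - 1) * (real (length Ps) - 2) / 4)
             * lattice_det (length Ps) (length Ps - 1) (S_unit_lattice k Ps)"
proof (intro allI impI)
  fix i
  define s where "s = length Ps"
  define m where "m = length Ps - 1"
  define L where "L = S_unit_lattice k Ps"
  define rb where "rb = (\<lambda>i. rvec (b i))"
  assume "i < length Ps - 1"
  hence i: "i < m" unfolding m_def .
  have bas: "lattice_basis s m L b" using basis unfolding s_def m_def L_def .
  have LL: "LLL_reduced s m b" using LLL unfolding s_def m_def .
  have ms: "m < s" "s = m + 1" using i unfolding m_def s_def by auto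
  have det_eq: "lattice_det s m L = sqrt (gram_det s m b)"
    unfolding lattice_det_def
  proof (rule the_equality)
    show "\<exists>b'. lattice_basis s m L b' \<and> sqrt (gram_det s m b) = sqrt (gram_det s m b')"
      using bas by blast
  next
    fix d assume "\<exists>b'. lattice_basis s m L b' \<and> d = sqrt (gram_det s m b')"
    then obtain b' where "lattice_basis s m L b'" "d = sqrt (gram_det s m b')" by blast
    thus "d = sqrt (gram_det s m b)" using gram_det_unique[OF bas] by simp
  qed
  define N where "N = (\<lambda>l. ip s (gso s rb l) (gso s rb l))"
  have G: "gram_det s m b = (\<Prod>l<m. N l)"
    unfolding gram_det_def N_def rb_def by (rule gram_prod)
  have ge1: "ip s (rb l) (rb l) \<ge> 1" if l: "l < m" for l
  proof -
    have "\<exists>j<s. b l j \<noteq> 0"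
    proof (rule ccontr)
      assume "\<not> (\<exists>j<s. b l j \<noteq> 0)"
      hence z: "\<forall>j<s. b l j = 0" by auto
      have zz: "\<forall>j<s. (\<Sum>i<m. (if i = l then 1 else 0) * real_of_int (b i j)) = 0"
        using z l by (intro allI impI, subst sum.remove[of _ l]) auto
      moreover have ind: "\<forall>c :: nat \<Rightarrow> real. (\<forall>j<s. (\<Sum>i<m. c i * real_of_int (b i j)) = 0) \<longrightarrow> (\<forall>i<m. c i = 0)"
        using bas unfolding lattice_basis_def by (elim conjE)
      ultimately have "\<forall>i<m. (if i = l then 1 else 0 :: real) = 0"
        by (intro mp[OF spec[OF ind, of "\<lambda>i. if i = l then 1 else 0"]])
      hence "(if l = l then 1 else 0 :: real) = 0" using l by blast
      thus False by simp
    qed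
    then obtain j where j: "j < s" "b l j \<noteq> 0" by auto
    have "(1::int) \<le> \<bar>b l j\<bar>" using j(2) by linarith
    hence a: "1 \<le> \<bar>real_of_int (b l j)\<bar>" by simp
    have "1 * 1 \<le> \<bar>real_of_int (b l j)\<bar> * \<bar>real_of_int (b l j)\<bar>"
      by (rule mult_mono[OF a a]) auto
    also have "\<dots> = rvec (b l) j * rvec (b l) j" by (simp add: rvec_def abs_mult_self)
    also have "\<dots> \<le> ip s (rb l) (rb l)" unfolding ip_def rb_def
      using j(1) by (intro member_le_sum) auto
    finally show ?thesis by simp
  qed
  have bnd: "ip s (rb l) (rb l) \<le> 2^l * N l" if "l < m" for l
    using LLL_bound[OF LL that] unfolding rb_def N_def .
  have "ip s (rb i) (rb i) \<le> (\<Prod>l<m. ip s (rb l) (rb l))"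
    using ge1 i by (intro prod_ge_single) auto
  also have "\<dots> \<le> (\<Prod>l<m. 2^l * N l)"
  proof (rule prod_mono)
    fix l assume "l \<in> {..<m}"
    hence "l < m" by simp
    thus "0 \<le> ip s (rb l) (rb l) \<and> ip s (rb l) (rb l) \<le> 2^l * N l"
      using bnd[of l] ip_nonneg[of s "rb l"] by simp
  qed
  also have "\<dots> = (\<Prod>l<m. (2::real)^l) * gram_det s m b" unfolding G by (simp add: prod.distrib)
  also have "\<dots> = 2 powr (real m * (real m - 1) / 2) * gram_det s m b" by (simp add: prod_pow2)
  finally have main: "ip s (rb i) (rb i) \<le> 2 powr (real m * (real m - 1) / 2) * gram_det s m b" .
  have "finite ((\<lambda>j. \<bar>b i j\<bar>) ` {..<s})" "(\<lambda>j. \<bar>b i j\<bar>) ` {..<s} \<noteq> {}" using ms by auto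
  from Max_in[OF this] obtain j where j: "j < s" "inf_norm s (b i) = \<bar>b i j\<bar>"
    unfolding inf_norm_def by auto
  have "(real_of_int \<bar>b i j\<bar>)\<^sup>2 = rvec (b i) j * rvec (b i) j" by (simp add: rvec_def power2_eq_square)
  also have "\<dots> \<le> ip s (rb i) (rb i)" unfolding ip_def rb_def
    using j(1) by (intro member_le_sum) auto
  finally have "(real_of_int \<bar>b i j\<bar>)\<^sup>2 \<le> 2 powr (real m * (real m - 1) / 2) * gram_det s m b"
    using main by linarith
  hence "real_of_int \<bar>b i j\<bar> \<le> sqrt (2 powr (real m * (real m - 1) / 2) * gram_det s m b)"
    by (rule real_le_rsqrt)
  also have "\<dots> = sqrt (2 powr (real m * (real m - 1) / 2)) * sqrt (gram_det s m b)"
    by (rule real_sqrt_mult)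
  also have "sqrt (2 powr (real m * (real m - 1) / 2)) = 2 powr (real m * (real m - 1) / 4)"
    by (subst powr_half_sqrt[symmetric]) (simp_all add: powr_powr)
  finally have "real_of_int (inf_norm s (b i)) \<le> 2 powr (real m * (real m - 1) / 4) * lattice_det s m L"
    using j det_eq by simp
  moreover have "real m * (real m - 1) = (real (length Ps) - 1) * (real (length Ps) - 2)"
    using ms unfolding s_def by simp
  ultimately show "real_of_int (inf_norm (length Ps) (b i))
           \<le> 2 powr ((real (length Ps) - 1) * (real (length Ps) - 2) / 4)
             * lattice_det (length Ps) (length Ps - 1) (S_unit_lattice k Ps)"
    unfolding s_def m_def L_def by simp
qed

end
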